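(* Let $G=(V,E)$ be a finite simple graph with $|V(G)|=n$ and let $k$ be a positive integer. Then $\gamma_{gr}^{Z,k}(G)\geq n-F_k(G)$.
   Context: For a vertex $v$, $N(v)$ is its open neighborhood and $N[v]=N(v)\cup\{v\}$. A sequence $S=(v_1,\ldots,v_m)$ of distinct vertices is a $k$-$Z$-sequence if for each $i\in[m]$ there is a vertex $u_i\in N(v_i)$ such that the number of indices $j<i$ with $u_i\in N[v_j]$ is less than $k$; $\gamma_{gr}^{Z,k}(G)$ is the maximum length of a $k$-$Z$-sequence. $k$-forcing: initially a set $B$ of vertices is colored blue and the rest white; at each step, if a blue vertex has at most $k$ white neighbors (and at least one), all its white neighbors are colored blue. $B$ is a $k$-forcing set if repeated application eventually colors all vertices blue. $F_k(G)$ is the minimum size of a $k$-forcing set of $G$. *)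

theory Defs
  imports Main
begin

definition simple_graph :: "'a set \<Rightarrow> ('a \<Rightarrow> 'a \<Rightarrow> bool) \<Rightarrow> bool" where
  "simple_graph V E \<longleftrightarrow> finite V \<and> (\<forall>u v. E u v \<longrightarrow> u \<in> V \<and> v \<in> V)
     \<and> (\<forall>u v. E u v \<longrightarrow> E v u) \<and> (\<forall>v. \<not> E v v)"

definition open_nbhd :: "'a set \<Rightarrow> ('a \<Rightarrow> 'a \<Rightarrow> bool) \<Rightarrow> 'a \<Rightarrow> 'a set" where
  "open_nbhd V E v = {u \<in> V. E v u}"

definition closed_nbhd :: "'a set \<Rightarrow> ('a \<Rightarrow> 'a \<Rightarrow> bool) \<Rightarrow> 'a \<Rightarrow> 'a set" where
  "closed_nbhd V E v = insert v (open_nbhd V E v)"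

definition kZ_sequence :: "'a set \<Rightarrow> ('a \<Rightarrow> 'a \<Rightarrow> bool) \<Rightarrow> nat \<Rightarrow> 'a list \<Rightarrow> bool" where
  "kZ_sequence V E k S \<longleftrightarrow> distinct S \<and> set S \<subseteq> V \<and>
     (\<forall>i < length S. \<exists>u \<in> open_nbhd V E (S ! i).
        card {j. j < i \<and> u \<in> closed_nbhd V E (S ! j)} < k)"

definition gamma_grZ :: "'a set \<Rightarrow> ('a \<Rightarrow> 'a \<Rightarrow> bool) \<Rightarrow> nat \<Rightarrow> nat" where
  "gamma_grZ V E k = Max {length S | S. kZ_sequence V E k S}"

definition kforce_step :: "'a set \<Rightarrow> ('a \<Rightarrow> 'a \<Rightarrow> bool) \<Rightarrow> nat \<Rightarrow> 'a set \<Rightarrow> 'a set \<Rightarrow> bool" where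
  "kforce_step V E k B B' \<longleftrightarrow> (\<exists>v \<in> B. 0 < card (open_nbhd V E v - B)
       \<and> card (open_nbhd V E v - B) \<le> k \<and> B' = B \<union> open_nbhd V E v)"

inductive kforce_reach :: "'a set \<Rightarrow> ('a \<Rightarrow> 'a \<Rightarrow> bool) \<Rightarrow> nat \<Rightarrow> 'a set \<Rightarrow> 'a set \<Rightarrow> bool"
  for V E k where
  refl: "kforce_reach V E k B B"
| step: "kforce_reach V E k B C \<Longrightarrow> kforce_step V E k C D \<Longrightarrow> kforce_reach V E k B D"

definition kforcing_set :: "'a set \<Rightarrow> ('a \<Rightarrow> 'a \<Rightarrow> bool) \<Rightarrow> nat \<Rightarrow> 'a set \<Rightarrow> bool" where
  "kforcing_set V E k B \<longleftrightarrow> B \<subseteq> V \<and> kforce_reach V E k B V"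

definition forcing_number :: "'a set \<Rightarrow> ('a \<Rightarrow> 'a \<Rightarrow> bool) \<Rightarrow> nat \<Rightarrow> nat" where
  "forcing_number V E k = Min {card B | B. kforcing_set V E k B}"

end

theory Submission
  imports Defs
begin

lemma reach_seq:
  assumes sg: "simple_graph V E"
  shows "kforce_reach V E k B C \<Longrightarrow> \<exists>S. distinct S \<and> set S = C - B \<and> set S \<subseteq> V \<and> B \<subseteq> C \<and>
    (\<forall>i<length S. \<exists>u\<in>open_nbhd V E (S!i). u \<in> C \<and> open_nbhd V E u \<subseteq> C \<and>
        card {j. j<i \<and> u \<in> closed_nbhd V E (S!j)} < k)"
proof (induction rule: kforce_reach.induct)
  case refl
  then show ?case by (intro exI[of _ "[]"]) auto
next
  case (step B C D)
  from step.IH obtain S where S: "distinct S" "set S = C - B" "set S \<subseteq> V" "B \<subseteq> C"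
    and P: "\<forall>i<length S. \<exists>u\<in>open_nbhd V E (S!i). u \<in> C \<and> open_nbhd V E u \<subseteq> C \<and>
        card {j. j<i \<and> u \<in> closed_nbhd V E (S!j)} < k" by blast
  from step.hyps(2) obtain v where v: "v\<in>C" "0 < card (open_nbhd V E v - C)"
    "card (open_nbhd V E v - C) \<le> k" "D = C \<union> open_nbhd V E v"
    unfolding kforce_step_def by blast
  define W where "W = open_nbhd V E v - C"
  have finV: "finite V" using sg unfolding simple_graph_def by blast
  have NV: "\<And>x. open_nbhd V E x \<subseteq> V" unfolding open_nbhd_def by auto
  have finW: "finite W" unfolding W_def using finV NV by (meson finite_Diff finite_subset)
  obtain ws where ws: "set ws = W" "distinct ws" using finite_distinct_list[OF finW] by blast
  have lenws: "length ws = card W" using ws distinct_card by fastforce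
  have Wk: "card W \<le> k" using v W_def by simp
  have noncl: "u \<notin> closed_nbhd V E w" if "u \<in> C" "open_nbhd V E u \<subseteq> C" "w \<in> W" for u w
  proof
    assume a: "u \<in> closed_nbhd V E w"
    have wC: "w \<notin> C" "w \<in> V" using that(3) W_def NV by auto
    show False
    proof (cases "u = w")
      case True then show ?thesis using that(1) wC by simp
    next
      case False
      then have "E w u" using a unfolding closed_nbhd_def open_nbhd_def by auto
      then have "E u w" using sg unfolding simple_graph_def by blast
      then have "w \<in> open_nbhd V E u" using wC unfolding open_nbhd_def by auto
      then show False using that(2) wC by auto
    qed
  qed
  have CD: "C \<subseteq> D" using v by auto
  show ?case
  proof (intro exI[of _ "ws @ S"] conjI allI impI)
    show "distinct (ws @ S)" using ws S W_def by auto
    show "set (ws @ S) = D - B" using ws S W_def v by auto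
    show "set (ws @ S) \<subseteq> V" using ws S W_def NV[of v] by auto
    show "B \<subseteq> D" using S CD by auto
  next
    fix i assume i: "i < length (ws @ S)"
    show "\<exists>u\<in>open_nbhd V E ((ws @ S) ! i). u \<in> D \<and> open_nbhd V E u \<subseteq> D \<and>
        card {j. j < i \<and> u \<in> closed_nbhd V E ((ws @ S) ! j)} < k"
    proof (cases "i < length ws")
      case True
      have w: "(ws @ S) ! i \<in> W" using True ws(1) nth_mem[of i ws] by (simp add: nth_append)
      then have "E v ((ws @ S) ! i)" "(ws @ S) ! i \<in> V" unfolding W_def open_nbhd_def by auto
      then have "E ((ws @ S) ! i) v" "v \<in> V" using sg unfolding simple_graph_def by blast+
      then have vn: "v \<in> open_nbhd V E ((ws @ S) ! i)" unfolding open_nbhd_def by auto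
      have "card {j. j < i \<and> v \<in> closed_nbhd V E ((ws @ S) ! j)} \<le> card {..<i}"
        by (intro card_mono) auto
      also have "\<dots> < k" using True lenws Wk by simp
      finally show ?thesis using vn v by auto
    next
      case False
      define i' where "i' = i - length ws"
      have i': "i' < length S" "i = i' + length ws" using i False i'_def by auto
      from P i' obtain u where u: "u\<in>open_nbhd V E (S!i')" "u \<in> C" "open_nbhd V E u \<subseteq> C"
        "card {j. j<i' \<and> u \<in> closed_nbhd V E (S!j)} < k" by blast
      have eq: "{j. j < i \<and> u \<in> closed_nbhd V E ((ws @ S) ! j)} =
          (\<lambda>j. j + length ws) ` {j. j<i' \<and> u \<in> closed_nbhd V E (S!j)}"
      proof (rule set_eqI, rule iffI)
        fix j assume j: "j \<in> {j. j < i \<and> u \<in> closed_nbhd V E ((ws @ S) ! j)}"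
        have "\<not> j < length ws"
        proof
          assume jl: "j < length ws"
          then have "(ws @ S) ! j \<in> W" using ws(1) nth_mem[of j ws] by (simp add: nth_append)
          then show False using noncl[OF u(2,3)] j by auto
        qed
        then show "j \<in> (\<lambda>j. j + length ws) ` {j. j<i' \<and> u \<in> closed_nbhd V E (S!j)}"
          using j i' by (auto simp: nth_append image_iff intro!: exI[of _ "j - length ws"])
      next
        fix j assume "j \<in> (\<lambda>j. j + length ws) ` {j. j<i' \<and> u \<in> closed_nbhd V E (S!j)}"
        then show "j \<in> {j. j < i \<and> u \<in> closed_nbhd V E ((ws @ S) ! j)}"
          using i' by (auto simp: nth_append)
      qed
      have "card {j. j < i \<and> u \<in> closed_nbhd V E ((ws @ S) ! j)} < k"
        unfolding eq by (subst card_image) (auto simp: inj_on_def u(4))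
      moreover have "(ws @ S) ! i = S ! i'" using i' by (simp add: nth_append)
      ultimately show ?thesis using u CD by auto
    qed
  qed
qed

theorem mainTheorem4:
  fixes V :: "'a set" and E :: "'a \<Rightarrow> 'a \<Rightarrow> bool" and k :: nat
  assumes "simple_graph V E" and "k \<ge> 1"
  shows "int (gamma_grZ V E k) \<ge> int (card V) - int (forcing_number V E k)"
proof -
  have finV: "finite V" using assms(1) unfolding simple_graph_def by blast
  have "kforcing_set V E k V" unfolding kforcing_set_def by (auto intro: kforce_reach.refl)
  then have ne: "{card B | B. kforcing_set V E k B} \<noteq> {}" by blast
  have "forcing_number V E k \<in> {card B | B. kforcing_set V E k B}"
    unfolding forcing_number_def
  proof (rule Min_in[OF _ ne])
    show "finite {card B | B. kforcing_set V E k B}"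
    proof (rule finite_subset[of _ "{..card V}"])
      show "{card B | B. kforcing_set V E k B} \<subseteq> {..card V}"
        using card_mono[OF finV] unfolding kforcing_set_def by auto
    qed simp
  qed
  then obtain B where B: "kforcing_set V E k B" "forcing_number V E k = card B" by auto
  then have BV: "B \<subseteq> V" "kforce_reach V E k B V" unfolding kforcing_set_def by auto
  from reach_seq[OF assms(1) BV(2)] obtain S where S: "distinct S" "set S = V - B" "set S \<subseteq> V"
    and P: "\<forall>i<length S. \<exists>u\<in>open_nbhd V E (S!i). u \<in> V \<and> open_nbhd V E u \<subseteq> V \<and>
        card {j. j<i \<and> u \<in> closed_nbhd V E (S!j)} < k" by blast
  have kz: "kZ_sequence V E k S" unfolding kZ_sequence_def using S P by blast
  have lenS: "length S = card V - card B"
    using S BV finV by (metis card_Diff_subset distinct_card finite_subset)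
  have fin: "finite {length S | S. kZ_sequence V E k S}"
  proof (rule finite_subset[of _ "{..card V}"])
    show "{length S | S. kZ_sequence V E k S} \<subseteq> {..card V}"
    proof
      fix x assume "x \<in> {length S | S. kZ_sequence V E k S}"
      then obtain T where T: "x = length T" "distinct T" "set T \<subseteq> V"
        unfolding kZ_sequence_def by blast
      then show "x \<in> {..card V}" using finV by (metis atMost_iff card_mono distinct_card)
    qed
  qed simp
  have "length S \<le> gamma_grZ V E k" unfolding gamma_grZ_def
    by (rule Max_ge[OF fin]) (use kz in blast)
  moreover have "card B \<le> card V" using card_mono[OF finV BV(1)] .
  ultimately show ?thesis using lenS B(2) by simp
qed

end
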